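(* In the setting of the context (with assumptions (A.1)–(A.3)), suppose the PMM generates infinite sequences $\{(u_k,v_k)\}$, $\{(z_k,w_k)\}$, $\{\gamma_k\}$, $\{\rho_k\}$; define $x_k=z_{k-1}+\lambda w_{k-1}+\lambda(Cv_k-d)$, $y_k=x_k-\lambda(w_{k-1}-Mu_k)$, and for $k\ge1$ $$\Gamma_k=\sum_{j=1}^k\rho_j\gamma_j,\quad \bar u_k=\frac1{\Gamma_k}\sum_{j=1}^k\rho_j\gamma_ju_j,\quad \bar v_k=\frac1{\Gamma_k}\sum_{j=1}^k\rho_j\gamma_jv_j,$$ $$\bar\epsilon_k^u=\frac1{\Gamma_k}\sum_{j=1}^k\rho_j\gamma_j\langle u_j-\bar u_k,-M^*y_j\rangle,\qquad \bar\epsilon_k^v=\frac1{\Gamma_k}\sum_{j=1}^k\rho_j\gamma_j\langle v_j-\bar v_k,-C^*x_j\rangle.$$ Let $d_0$ be the distance from $(z_0,w_0)$ to $S_e(\partial h_1,\partial h_2)$. Then for every integer $k\ge1$, $$\bar\epsilon_k^u+\bar\epsilon_k^v\le\frac1{\Gamma_k}\left[\frac1{\Gamma_k}\sum_{j=1}^k\rho_j\gamma_j\left(\lambda^2\|Mu_j+Cv_j-d\|^2+\|d-Cv_j-w_{j-1}\|^2\right)+4d_0^2\right].$$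
   Context: Let $f:\mathbb{R}^{m_1}\to(-\infty,\infty]$, $g:\mathbb{R}^{m_2}\to(-\infty,\infty]$ be proper closed convex, $M:\mathbb{R}^{m_1}\to\mathbb{R}^n$, $C:\mathbb{R}^{m_2}\to\mathbb{R}^n$ linear, $d\in\mathbb{R}^n$; consider $\min\{f(u)+g(v):Mu+Cv=d\}$ with Lagrangian $L(u,v,z)=f(u)+g(v)+\langle Mu+Cv-d,z\rangle$. A saddle point is $(u^*,v^*,z^* )$ with $L(u^*,v^*,z^* )$ finite and $\min_{(u,v)}L(u,v,z^* )=L(u^*,v^*,z^* )=\max_zL(u^*,v^*,z)$. Let $h_1(z)=f^*(-M^*z)$, $h_2(z)=g^*(-C^*z)+\langle d,z\rangle$ ($^*$ on functions = Fenchel conjugate, on operators = adjoint), and $S_e(\partial h_1,\partial h_2)=\{(z,w)\in\mathbb{R}^n\times\mathbb{R}^n:-w\in\partial h_1(z),\ w\in\partial h_2(z)\}$ (a closed convex set). Standing assumptions: (A.1) $L$ has a saddle point; (A.2) $\mathrm{ri}(\mathrm{dom} f^* )\cap\mathrm{range}(M^* )\ne\emptyset$; (A.3) $\mathrm{ri}(\mathrm{dom} g^* )\cap\mathrm{range}(C^* )\ne\emptyset$. PMM: given $(z_0,w_0)\in\mathbb{R}^n\times\mathbb{R}^n$, $\lambda>0$, $\bar\rho\in[0,1)$, for $k=1,2,\dots$: (1) let $v_k$ be a minimizer of $g(v)+\langle z_{k-1}+\lambda w_{k-1},Cv-d\rangle+\frac\lambda2\|Cv-d\|^2$ and $u_k$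 a minimizer of $f(u)+\langle z_{k-1}+\lambda(Cv_k-d),Mu\rangle+\frac\lambda2\|Mu\|^2$; (2) if $\|Mu_k+Cv_k-d\|+\|Mu_k-w_{k-1}\|=0$ stop; otherwise set $\gamma_k=\dfrac{\lambda\|Cv_k-d+w_{k-1}\|^2+\lambda\langle d-Cv_k-Mu_k,w_{k-1}-Mu_k\rangle}{\|Mu_k+Cv_k-d\|^2+\lambda^2\|Mu_k-w_{k-1}\|^2}$; (3) choose $\rho_k\in[1-\bar\rho,1+\bar\rho]$ and set $z_k=z_{k-1}+\rho_k\gamma_k(Mu_k+Cv_k-d)$, $w_k=w_{k-1}-\rho_k\gamma_k\lambda(w_{k-1}-Mu_k)$. *)

theory Defs
  imports "HOL-Analysis.Analysis"
begin

text \<open>Extended-real-valued functions on a Euclidean space: f x = \<infinity> means x is outside dom f.\<close>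

definition proper_fun :: "('a \<Rightarrow> ereal) \<Rightarrow> bool" where
  "proper_fun f \<longleftrightarrow> (\<exists>x. f x < \<infinity>) \<and> (\<forall>x. f x > -\<infinity>)"

definition epigraph_e :: "('a \<Rightarrow> ereal) \<Rightarrow> ('a \<times> real) set" where
  "epigraph_e f = {(x, t). f x \<le> ereal t}"

definition closed_fun :: "('a::topological_space \<Rightarrow> ereal) \<Rightarrow> bool" where
  "closed_fun f \<longleftrightarrow> closed (epigraph_e f)"

definition convex_fun :: "('a::real_vector \<Rightarrow> ereal) \<Rightarrow> bool" where
  "convex_fun f \<longleftrightarrow> convex (epigraph_e f)"

definition effdom :: "('a \<Rightarrow> ereal) \<Rightarrow> 'a set" where
  "effdom f = {x. f x < \<infinity>}"

definition fconj :: "('a::real_inner \<Rightarrow> ereal) \<Rightarrow> 'a \<Rightarrow> ereal" where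
  "fconj f y = (SUP x. ereal (x \<bullet> y) - f x)"

definition subdiff :: "('a::real_inner \<Rightarrow> ereal) \<Rightarrow> 'a \<Rightarrow> 'a set" where
  "subdiff h z = {w. \<bar>h z\<bar> \<noteq> \<infinity> \<and> (\<forall>z'. h z + ereal (w \<bullet> (z' - z)) \<le> h z')}"

definition Se :: "('a::real_inner \<Rightarrow> ereal) \<Rightarrow> ('a \<Rightarrow> ereal) \<Rightarrow> ('a \<times> 'a) set" where
  "Se h1 h2 = {(z, w). -w \<in> subdiff h1 z \<and> w \<in> subdiff h2 z}"

definition lagr :: "('a \<Rightarrow> ereal) \<Rightarrow> ('b \<Rightarrow> ereal) \<Rightarrow> ('a \<Rightarrow> 'c) \<Rightarrow> ('b \<Rightarrow> 'c) \<Rightarrow> 'c::real_inner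
   \<Rightarrow> 'a \<Rightarrow> 'b \<Rightarrow> 'c \<Rightarrow> ereal" where
  "lagr f g M C d u v z = f u + g v + ereal ((M u + C v - d) \<bullet> z)"

definition is_saddle ::  "('a \<Rightarrow> ereal) \<Rightarrow> ('b \<Rightarrow> ereal) \<Rightarrow> ('a \<Rightarrow> 'c) \<Rightarrow> ('b \<Rightarrow> 'c) \<Rightarrow> 'c::real_inner
   \<Rightarrow> 'a \<Rightarrow> 'b \<Rightarrow> 'c \<Rightarrow> bool" where
  "is_saddle f g M C d us vs zs \<longleftrightarrow>
     \<bar>lagr f g M C d us vs zs\<bar> \<noteq> \<infinity> \<and>
     (\<forall>u v. lagr f g M C d us vs zs \<le> lagr f g M C d u v zs) \<and>
     (\<forall>z. lagr f g M C d us vs z \<le> lagr f g M C d us vs zs)"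

end

theory Submission
  imports Defs
begin

lemma small_le0:
  fixes a K :: real
  assumes "\<And>t. 0 < t \<Longrightarrow> t \<le> 1 \<Longrightarrow> a \<le> t * K"
  shows "a \<le> 0"
proof (rule ccontr)
  assume "\<not> a \<le> 0" hence a: "a > 0" by simp
  show False
  proof (cases "K \<le> 0")
    case True then show False using assms[of 1] a by simp
  next
    case False
    define t where "t = a / (2*K + a)"
    have t0: "0 < t" "t \<le> 1" using a False by (auto simp: t_def)
    have "0 < K*a + a*a" using a False by (simp add: add_pos_pos)
    then have "t * K < a" using a False unfolding t_def by (simp add: field_simps)
    then show False using assms[OF t0] by simp
  qed
qed

lemma min_subgrad:
  fixes F :: "'b::euclidean_space \<Rightarrow> ereal" and L :: "'b \<Rightarrow> 'c::euclidean_space"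
  assumes prp: "proper_fun F" and cvx: "convex_fun F" and lin: "linear L"
    and mn: "\<forall>v'. F v0 + ereal (c \<bullet> (L v0 - e) + lam / 2 * (norm (L v0 - e))\<^sup>2)
                 \<le> F v' + ereal (c \<bullet> (L v' - e) + lam / 2 * (norm (L v' - e))\<^sup>2)"
  shows "\<exists>r. F v0 = ereal r \<and> (\<forall>v. ereal (r + (- adjoint L (c + lam *\<^sub>R (L v0 - e))) \<bullet> (v - v0)) \<le> F v)"
proof -
  let ?Q = "\<lambda>v. c \<bullet> (L v - e) + lam / 2 * (norm (L v - e))\<^sup>2"
  from prp obtain v1 where v1: "F v1 < \<infinity>" and ninf: "\<And>x. F x > -\<infinity>"
    unfolding proper_fun_def by auto
  have "F v0 + ereal (?Q v0) \<le> F v1 + ereal (?Q v1)" using mn by blast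
  then have "F v0 \<noteq> \<infinity>" using v1 by auto
  with ninf[of v0] obtain r where r: "F v0 = ereal r" by (cases "F v0") auto
  have "ereal (r + (- adjoint L (c + lam *\<^sub>R (L v0 - e))) \<bullet> (v - v0)) \<le> F v" for v
  proof (cases "F v")
    case PInf then show ?thesis by simp
  next
    case MInf then show ?thesis using ninf[of v] by simp
  next
    case (real r1)
    define h where "h = v - v0"
    define g0 where "g0 = c + lam *\<^sub>R (L v0 - e)"
    have key: "r - r1 - g0 \<bullet> L h \<le> t * (lam / 2 * (norm (L h))\<^sup>2)" if t: "0 < t" "t \<le> 1" for t
    proof -
      have e1: "(v0, r) \<in> epigraph_e F" "(v, r1) \<in> epigraph_e F"
        using r real by (auto simp: epigraph_e_def)
      have "(1 - t) *\<^sub>R (v0, r) + t *\<^sub>R (v, r1) \<in> epigraph_e F"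
        using cvx e1 t unfolding convex_fun_def by (intro convexD) auto
      moreover have "(1 - t) *\<^sub>R (v0, r) + t *\<^sub>R (v, r1) = (v0 + t *\<^sub>R h, (1-t) * r + t * r1)"
        by (simp add: h_def algebra_simps)
      ultimately have cv: "F (v0 + t *\<^sub>R h) \<le> ereal ((1-t) * r + t * r1)"
        by (simp add: epigraph_e_def)
      have "F v0 + ereal (?Q v0) \<le> F (v0 + t *\<^sub>R h) + ereal (?Q (v0 + t *\<^sub>R h))" using mn by blast
      also have "\<dots> \<le> ereal ((1-t) * r + t * r1) + ereal (?Q (v0 + t *\<^sub>R h))"
        using cv by (rule add_right_mono)
      finally have "r + ?Q v0 \<le> (1-t) * r + t * r1 + ?Q (v0 + t *\<^sub>R h)" using r by simp
      moreover have "?Q (v0 + t *\<^sub>R h) = ?Q v0 + t * (g0 \<bullet> L h) + t * t * (lam / 2 * (norm (L h))\<^sup>2)"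
        using lin by (simp add: g0_def linear_add linear_scale power2_norm_eq_inner inner_simps algebra_simps inner_commute)
      ultimately have "t * (r - r1 - g0 \<bullet> L h) \<le> t * (t * (lam / 2 * (norm (L h))\<^sup>2))"
        by (simp add: algebra_simps)
      then show ?thesis using t by simp
    qed
    have "r - r1 - g0 \<bullet> L h \<le> 0" by (rule small_le0[OF key])
    moreover have "(- adjoint L g0) \<bullet> (v - v0) = - (g0 \<bullet> L h)"
      using adjoint_works[OF lin] by (simp add: h_def inner_commute)
    ultimately show ?thesis using real by (simp add: g0_def)
  qed
  with r show ?thesis by blast
qed

lemma subgrad_conj:
  fixes F :: "'b::euclidean_space \<Rightarrow> ereal" and L :: "'b \<Rightarrow> 'c::euclidean_space"
  assumes lin: "linear L" and r: "F v0 = ereal r"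
    and sg: "\<forall>v. ereal (r + (- adjoint L z0) \<bullet> (v - v0)) \<le> F v"
  shows "e - L v0 \<in> subdiff (\<lambda>z. fconj F (- adjoint L z) + ereal (e \<bullet> z)) z0"
proof -
  have aw: "\<And>x y. x \<bullet> adjoint L y = L x \<bullet> y" using adjoint_works[OF lin] by blast
  have lo: "ereal (v0 \<bullet> s - r) \<le> fconj F s" for s
  proof -
    have "ereal (v0 \<bullet> s) - F v0 \<le> fconj F s" unfolding fconj_def by (rule SUP_upper) simp
    then show ?thesis using r by simp
  qed
  have up: "fconj F (- adjoint L z0) \<le> ereal (v0 \<bullet> (- adjoint L z0) - r)"
    unfolding fconj_def
  proof (rule SUP_least)
    fix x
    show "ereal (x \<bullet> - adjoint L z0) - F x \<le> ereal (v0 \<bullet> - adjoint L z0 - r)"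
    proof (cases "F x")
      case (real rx)
      have "r + (- adjoint L z0) \<bullet> (x - v0) \<le> rx" using sg[rule_format, of x] real by simp
      then show ?thesis using real by (simp add: inner_simps inner_commute)
    qed (use sg[rule_format, of x] in auto)
  qed
  have eq: "fconj F (- adjoint L z0) = ereal (v0 \<bullet> (- adjoint L z0) - r)"
    using up lo[of "- adjoint L z0"] by (rule antisym)
  show ?thesis unfolding subdiff_def
  proof (intro CollectI conjI allI)
    show "\<bar>fconj F (- adjoint L z0) + ereal (e \<bullet> z0)\<bar> \<noteq> \<infinity>" using eq by simp
    fix z'
    have "ereal (v0 \<bullet> (- adjoint L z') - r) \<le> fconj F (- adjoint L z')" by (rule lo)
    moreover have "v0 \<bullet> (- adjoint L z0) - r + e \<bullet> z0 + (e - L v0) \<bullet> (z' - z0)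
        = v0 \<bullet> (- adjoint L z') - r + e \<bullet> z'"
      by (simp add: aw inner_simps algebra_simps)
    ultimately show "fconj F (- adjoint L z0) + ereal (e \<bullet> z0) + ereal ((e - L v0) \<bullet> (z' - z0))
        \<le> fconj F (- adjoint L z') + ereal (e \<bullet> z')"
      using eq by (metis add_right_mono plus_ereal.simps(1))
  qed
qed

lemma subdiff_mono:
  fixes H :: "'a::real_inner \<Rightarrow> ereal"
  assumes "a \<in> subdiff H p" "b \<in> subdiff H q"
  shows "0 \<le> (a - b) \<bullet> (p - q)"
proof -
  from assms obtain hp hq where hp: "H p = ereal hp" and hq: "H q = ereal hq"
    unfolding subdiff_def by (cases "H p"; cases "H q") auto
  have "H p + ereal (a \<bullet> (q - p)) \<le> H q" "H q + ereal (b \<bullet> (p - q)) \<le> H p"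
    using assms unfolding subdiff_def by auto
  then have "hp + a \<bullet> (q - p) \<le> hq" "hq + b \<bullet> (p - q) \<le> hp" using hp hq by auto
  then show ?thesis by (simp add: inner_simps algebra_simps)
qed

lemma saddle_Se:
  fixes f :: "'a::euclidean_space \<Rightarrow> ereal" and g :: "'b::euclidean_space \<Rightarrow> ereal"
    and M :: "'a \<Rightarrow> 'c::euclidean_space" and C :: "'b \<Rightarrow> 'c"
  assumes pf: "proper_fun f" and pg: "proper_fun g" and lM: "linear M" and lC: "linear C"
    and sd: "is_saddle f g M C d us vs zs"
  shows "(zs, M us) \<in> Se (\<lambda>p. fconj f (- adjoint M p)) (\<lambda>p. fconj g (- adjoint C p) + ereal (d \<bullet> p))"
proof -
  have nf: "\<And>x. f x > -\<infinity>" and ng: "\<And>x. g x > -\<infinity>"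
    using pf pg unfolding proper_fun_def by auto
  have fin: "\<bar>f us + g vs + ereal ((M us + C vs - d) \<bullet> zs)\<bar> \<noteq> \<infinity>"
    using sd unfolding is_saddle_def lagr_def by simp
  obtain r1 where r1: "f us = ereal r1"
    using fin nf[of us] ng[of vs] by (cases "f us"; cases "g vs") auto
  obtain r2 where r2: "g vs = ereal r2"
    using fin nf[of us] ng[of vs] by (cases "f us"; cases "g vs") auto
  have zmax: "\<And>z. (M us + C vs - d) \<bullet> z \<le> (M us + C vs - d) \<bullet> zs"
    using sd r1 r2 unfolding is_saddle_def lagr_def by auto
  have feas: "M us + C vs - d = 0"
  proof -
    have "(M us + C vs - d) \<bullet> (zs + (M us + C vs - d)) \<le> (M us + C vs - d) \<bullet> zs" by (rule zmax)
    then have "(M us + C vs - d) \<bullet> (M us + C vs - d) \<le> 0" by (simp add: inner_simps)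
    then show ?thesis by (metis inner_gt_zero_iff not_le)
  qed
  have umin: "\<And>u v. ereal (r1 + r2 + (M us + C vs - d) \<bullet> zs) \<le> f u + g v + ereal ((M u + C v - d) \<bullet> zs)"
    using sd r1 r2 unfolding is_saddle_def lagr_def by auto
  have sgf: "\<forall>u. ereal (r1 + (- adjoint M zs) \<bullet> (u - us)) \<le> f u"
  proof
    fix u
    show "ereal (r1 + (- adjoint M zs) \<bullet> (u - us)) \<le> f u"
    proof (cases "f u")
      case (real ru)
      have "r1 + r2 + (M us + C vs - d) \<bullet> zs \<le> ru + r2 + (M u + C vs - d) \<bullet> zs"
        using umin[of u vs] real r2 by simp
      then show ?thesis using real adjoint_works[OF lM]
        by (simp add: inner_simps algebra_simps inner_commute linear_diff[OF lM])
    qed (use nf[of u] in auto)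
  qed
  have sgg: "\<forall>v. ereal (r2 + (- adjoint C zs) \<bullet> (v - vs)) \<le> g v"
  proof
    fix v
    show "ereal (r2 + (- adjoint C zs) \<bullet> (v - vs)) \<le> g v"
    proof (cases "g v")
      case (real rv)
      have "r1 + r2 + (M us + C vs - d) \<bullet> zs \<le> r1 + rv + (M us + C v - d) \<bullet> zs"
        using umin[of us v] real r1 by simp
      then show ?thesis using real adjoint_works[OF lC]
        by (simp add: inner_simps algebra_simps inner_commute linear_diff[OF lC])
    qed (use ng[of v] in auto)
  qed
  have h1: "0 - M us \<in> subdiff (\<lambda>z. fconj f (- adjoint M z) + ereal (0 \<bullet> z)) zs"
    by (rule subgrad_conj[OF lM r1 sgf])
  have h2: "d - C vs \<in> subdiff (\<lambda>z. fconj g (- adjoint C z) + ereal (d \<bullet> z)) zs"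
    by (rule subgrad_conj[OF lC r2 sgg])
  have e: "d - C vs = M us" using feas by (simp add: algebra_simps)
  show ?thesis using h1 h2 e unfolding Se_def by (simp add: zero_ereal_def[symmetric])
qed

lemma psi_identity:
  fixes z0 W a b z w :: "'c::real_inner"
  shows "(z0 + lam *\<^sub>R (W - b) - z) \<bullet> (b - w) + (z0 + lam *\<^sub>R (a - b) - z) \<bullet> (w - a)
     = (b - a) \<bullet> (z0 - z) + lam * ((W - a) \<bullet> (W - w))
       - (lam * (norm (W - b))\<^sup>2 + lam * ((b - a) \<bullet> (W - a)))"
  by (simp add: power2_norm_eq_inner inner_simps algebra_simps inner_commute)

lemma descent:
  fixes q p G :: "'v::real_inner"
  assumes "gam > 0" "rho > 0" "rho < 2"
  shows "2 * (rho * gam) * (G \<bullet> (q - p) - gam * (norm G)\<^sup>2)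
     \<le> (norm (q - p))\<^sup>2 - (norm (q - (rho * gam) *\<^sub>R G - p))\<^sup>2"
proof -
  have e: "(norm (q - (rho * gam) *\<^sub>R G - p))\<^sup>2 = (norm (q - p))\<^sup>2 - 2 * (rho * gam) * (G \<bullet> (q - p))
     + (rho * gam)\<^sup>2 * (norm G)\<^sup>2"
    unfolding power2_norm_eq_inner by (simp add: inner_simps algebra_simps inner_commute power2_eq_square)
  have "0 \<le> rho * gam * gam * (norm G)\<^sup>2 * (2 - rho)"
    using assms by simp
  then show ?thesis unfolding e by (simp add: algebra_simps power2_eq_square)
qed

lemma cauchy_weighted:
  fixes t r :: "nat \<Rightarrow> real"
  assumes "finite A" "\<And>j. j \<in> A \<Longrightarrow> t j > 0" "sum t A > 0"
  shows "((\<Sum>j\<in>A. t j * r j) / sum t A)\<^sup>2 \<le> (\<Sum>j\<in>A. t j * (r j)\<^sup>2) / sum t A"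
proof -
  define S where "S = (\<Sum>j\<in>A. t j * r j) / sum t A"
  define G where "G = sum t A"
  have "0 \<le> (\<Sum>j\<in>A. t j * (r j - S)\<^sup>2)"
    using assms by (intro sum_nonneg mult_nonneg_nonneg) (auto simp: less_imp_le)
  also have "\<dots> = (\<Sum>j\<in>A. t j * (r j)\<^sup>2) - 2 * S * (\<Sum>j\<in>A. t j * r j) + S\<^sup>2 * G"
    by (simp add: G_def power2_diff algebra_simps sum.distrib sum_subtractf sum_distrib_left sum_distrib_right)
  also have "(\<Sum>j\<in>A. t j * r j) = S * G" using assms by (simp add: S_def G_def)
  finally have "S\<^sup>2 * G \<le> (\<Sum>j\<in>A. t j * (r j)\<^sup>2)" by (simp add: power2_eq_square algebra_simps)
  then have "S\<^sup>2 \<le> (\<Sum>j\<in>A. t j * (r j)\<^sup>2) / G" using assms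
    by (simp add: G_def pos_le_divide_eq mult.commute)
  then show ?thesis by (simp add: S_def G_def)
qed

lemma avg_norm:
  fixes X :: "nat \<Rightarrow> 'v::real_normed_vector"
  assumes "\<And>j. j \<in> A \<Longrightarrow> t j > 0" "G > 0"
  shows "norm ((1 / G) *\<^sub>R (\<Sum>j\<in>A. t j *\<^sub>R X j)) \<le> (1 / G) * (\<Sum>j\<in>A. t j * norm (X j))"
proof -
  have "norm (\<Sum>j\<in>A. t j *\<^sub>R X j) \<le> (\<Sum>j\<in>A. norm (t j *\<^sub>R X j))" by (rule norm_sum)
  also have "\<dots> = (\<Sum>j\<in>A. t j * norm (X j))"
    using assms by (intro sum.cong refl) (simp add: abs_of_pos)
  finally show ?thesis using assms by (simp add: divide_right_mono)
qed

theorem mainTheorem7: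
  fixes f :: "'a::euclidean_space \<Rightarrow> ereal" and g :: "'b::euclidean_space \<Rightarrow> ereal"
    and M :: "'a \<Rightarrow> 'c::euclidean_space" and C :: "'b \<Rightarrow> 'c" and d :: 'c
    and lam rhobar :: real
    and u :: "nat \<Rightarrow> 'a" and v :: "nat \<Rightarrow> 'b" and z w :: "nat \<Rightarrow> 'c"
    and gam rho :: "nat \<Rightarrow> real" and k :: nat
  assumes f_pcc: "proper_fun f" "closed_fun f" "convex_fun f"
    and g_pcc: "proper_fun g" "closed_fun g" "convex_fun g"
    and lin: "linear M" "linear C"
    and A1: "\<exists>us vs zs. is_saddle f g M C d us vs zs"
    and A2: "rel_interior (effdom (fconj f)) \<inter> range (adjoint M) \<noteq> {}"
    and A3: "rel_interior (effdom (fconj g)) \<inter> range (adjoint C) \<noteq> {}"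
    and lam_pos: "lam > 0" and rhobar: "0 \<le> rhobar" "rhobar < 1"
    and v_min: "\<And>j. j \<ge> 1 \<Longrightarrow> \<forall>v'.
       g (v j) + ereal ((z (j-1) + lam *\<^sub>R w (j-1)) \<bullet> (C (v j) - d) + lam / 2 * (norm (C (v j) - d))\<^sup>2)
       \<le> g v' + ereal ((z (j-1) + lam *\<^sub>R w (j-1)) \<bullet> (C v' - d) + lam / 2 * (norm (C v' - d))\<^sup>2)"
    and u_min: "\<And>j. j \<ge> 1 \<Longrightarrow> \<forall>u'.
       f (u j) + ereal ((z (j-1) + lam *\<^sub>R (C (v j) - d)) \<bullet> M (u j) + lam / 2 * (norm (M (u j)))\<^sup>2)
       \<le> f u' + ereal ((z (j-1) + lam *\<^sub>R (C (v j) - d)) \<bullet> M u' + lam / 2 * (norm (M u'))\<^sup>2)"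
    and nostop: "\<And>j. j \<ge> 1 \<Longrightarrow> norm (M (u j) + C (v j) - d) + norm (M (u j) - w (j-1)) \<noteq> 0"
    and gam_def: "\<And>j. j \<ge> 1 \<Longrightarrow> gam j =
       (lam * (norm (C (v j) - d + w (j-1)))\<^sup>2 + lam * ((d - C (v j) - M (u j)) \<bullet> (w (j-1) - M (u j))))
       / ((norm (M (u j) + C (v j) - d))\<^sup>2 + lam\<^sup>2 * (norm (M (u j) - w (j-1)))\<^sup>2)"
    and rho_rng: "\<And>j. j \<ge> 1 \<Longrightarrow> 1 - rhobar \<le> rho j \<and> rho j \<le> 1 + rhobar"
    and z_upd: "\<And>j. j \<ge> 1 \<Longrightarrow> z j = z (j-1) + (rho j * gam j) *\<^sub>R (M (u j) + C (v j) - d)"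
    and w_upd: "\<And>j. j \<ge> 1 \<Longrightarrow> w j = w (j-1) - (rho j * gam j * lam) *\<^sub>R (w (j-1) - M (u j))"
    and k_ge: "k \<ge> 1"
  defines "x \<equiv> \<lambda>j. z (j-1) + lam *\<^sub>R w (j-1) + lam *\<^sub>R (C (v j) - d)"
    and "y \<equiv> \<lambda>j. z (j-1) + lam *\<^sub>R w (j-1) + lam *\<^sub>R (C (v j) - d) - lam *\<^sub>R (w (j-1) - M (u j))"
    and "Gam \<equiv> (\<Sum>j=1..k. rho j * gam j)"
    and "ubar \<equiv> (1 / (\<Sum>j=1..k. rho j * gam j)) *\<^sub>R (\<Sum>j=1..k. (rho j * gam j) *\<^sub>R u j)"
    and "vbar \<equiv> (1 / (\<Sum>j=1..k. rho j * gam j)) *\<^sub>R (\<Sum>j=1..k. (rho j * gam j) *\<^sub>R v j)"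
    and "d0 \<equiv> infdist (z 0, w 0)
           (Se (\<lambda>p. fconj f (- adjoint M p)) (\<lambda>p. fconj g (- adjoint C p) + ereal (d \<bullet> p)))"
  shows "(1 / Gam) * (\<Sum>j=1..k. rho j * gam j * ((u j - ubar) \<bullet> (- adjoint M (y j))))
       + (1 / Gam) * (\<Sum>j=1..k. rho j * gam j * ((v j - vbar) \<bullet> (- adjoint C (x j))))
       \<le> (1 / Gam) * ((1 / Gam) * (\<Sum>j=1..k. rho j * gam j *
              (lam\<^sup>2 * (norm (M (u j) + C (v j) - d))\<^sup>2 + (norm (d - C (v j) - w (j-1)))\<^sup>2))
           + 4 * d0\<^sup>2)"
proof -
  have hx: "\<And>j. x j = z (j-1) + lam *\<^sub>R w (j-1) + lam *\<^sub>R (C (v j) - d)" by (simp add: assms(23))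
  have hy: "\<And>j. y j = z (j-1) + lam *\<^sub>R w (j-1) + lam *\<^sub>R (C (v j) - d) - lam *\<^sub>R (w (j-1) - M (u j))"
    by (simp add: assms(24))
  have hGam: "Gam = (\<Sum>j=1..k. rho j * gam j)" by (simp add: assms(25))
  have hubar: "ubar = (1 / Gam) *\<^sub>R (\<Sum>j=1..k. (rho j * gam j) *\<^sub>R u j)" by (simp add: assms(26) hGam)
  have hvbar: "vbar = (1 / Gam) *\<^sub>R (\<Sum>j=1..k. (rho j * gam j) *\<^sub>R v j)" by (simp add: assms(27) hGam)
  define h1 where "h1 = (\<lambda>p. fconj f (- adjoint M p))"
  define h2 where "h2 = (\<lambda>p. fconj g (- adjoint C p) + ereal (d \<bullet> p))"
  have hd0: "d0 = infdist (z 0, w 0) (Se h1 h2)" by (simp add: assms(28) h1_def h2_def)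
  define a where "a j = M (u j)" for j
  define b where "b j = d - C (v j)" for j
  define q where "q j = (z j, w j)" for j
  define G where "G j = (b j - a j, lam *\<^sub>R (w (j-1) - a j))" for j
  define P where "P j = (y j, b j)" for j
  define psi where "psi j p = (x j - fst p) \<bullet> (b j - snd p) + (y j - fst p) \<bullet> (snd p - a j)" for j p
  have xe: "x j = z (j-1) + lam *\<^sub>R (w (j-1) - b j)" for j
    by (simp add: hx b_def algebra_simps)
  have ye: "y j = z (j-1) + lam *\<^sub>R (a j - b j)" for j
    by (simp add: hy a_def b_def algebra_simps)
  have nG: "(norm (G j))\<^sup>2 = (norm (M (u j) + C (v j) - d))\<^sup>2 + lam\<^sup>2 * (norm (M (u j) - w (j-1)))\<^sup>2" for j
  proof -
    have "(norm (G j))\<^sup>2 = (norm (b j - a j))\<^sup>2 + (norm (lam *\<^sub>R (w (j-1) - a j)))\<^sup>2"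
      by (simp add: G_def norm_Pair)
    also have "norm (b j - a j) = norm (M (u j) + C (v j) - d)"
      by (metis a_def b_def norm_minus_commute diff_diff_eq2 add_diff_eq)
    also have "(norm (lam *\<^sub>R (w (j-1) - a j)))\<^sup>2 = lam\<^sup>2 * (norm (M (u j) - w (j-1)))\<^sup>2"
      by (simp add: a_def power_mult_distrib norm_minus_commute)
    finally show ?thesis .
  qed
  have jfacts: "gam j > 0 \<and> rho j > 0 \<and> rho j < 2
     \<and> gam j * (norm (G j))\<^sup>2 = lam * (norm (w (j-1) - b j))\<^sup>2 + lam * ((b j - a j) \<bullet> (w (j-1) - a j))"
    if j: "j \<ge> 1" for j
  proof -
    have N: "lam * (norm (C (v j) - d + w (j-1)))\<^sup>2 + lam * ((d - C (v j) - M (u j)) \<bullet> (w (j-1) - M (u j)))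
        = lam * (norm (w (j-1) - b j))\<^sup>2 + lam * ((b j - a j) \<bullet> (w (j-1) - a j))"
      by (simp add: a_def b_def algebra_simps)
    have Dpos: "(norm (G j))\<^sup>2 > 0"
    proof -
      have "norm (M (u j) + C (v j) - d) \<noteq> 0 \<or> norm (M (u j) - w (j-1)) \<noteq> 0" using nostop[OF j] by auto
      then show ?thesis unfolding nG using lam_pos
        by (auto intro: add_pos_nonneg add_nonneg_pos)
    qed
    have gq: "gam j * (norm (G j))\<^sup>2 = lam * (norm (w (j-1) - b j))\<^sup>2 + lam * ((b j - a j) \<bullet> (w (j-1) - a j))"
      using gam_def[OF j] Dpos unfolding nG N[symmetric] by simp
    have Npos: "(norm (w (j-1) - b j))\<^sup>2 + (b j - a j) \<bullet> (w (j-1) - a j) > 0"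
    proof -
      define pp where "pp = w (j-1) - b j"
      define ss where "ss = b j - a j"
      have e1: "w (j-1) - a j = pp + ss" by (simp add: pp_def ss_def)
      have e2: "2 * ((norm pp)\<^sup>2 + ss \<bullet> (pp + ss)) = (norm pp)\<^sup>2 + (norm ss)\<^sup>2 + (norm (pp + ss))\<^sup>2"
        by (simp add: power2_norm_eq_inner inner_simps inner_commute)
      have "pp \<noteq> 0 \<or> ss \<noteq> 0"
      proof (rule ccontr)
        assume "\<not> (pp \<noteq> 0 \<or> ss \<noteq> 0)"
        then have "M (u j) + C (v j) - d = 0" "M (u j) - w (j-1) = 0"
          by (auto simp: pp_def ss_def a_def b_def algebra_simps)
        then show False using nostop[OF j] by simp
      qed
      then have "(norm pp)\<^sup>2 + (norm ss)\<^sup>2 > 0" by (auto intro: add_pos_nonneg add_nonneg_pos)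
      then have "2 * ((norm pp)\<^sup>2 + ss \<bullet> (pp + ss)) > 0" unfolding e2 by (auto intro: add_pos_nonneg)
      then show ?thesis by (simp add: e1 pp_def ss_def)
    qed
    have "gam j * (norm (G j))\<^sup>2 > 0" unfolding gq using Npos lam_pos
      by (metis distrib_left mult_pos_pos)
    then have "gam j > 0" using Dpos by (simp add: zero_less_mult_iff)
    moreover have "rho j > 0" "rho j < 2" using rho_rng[OF j] rhobar by auto
    ultimately show ?thesis using gq by simp
  qed
  have psi_eq: "psi j p = G j \<bullet> (q (j-1) - p) - gam j * (norm (G j))\<^sup>2" if j: "j \<ge> 1" for j p
  proof -
    obtain zz ww where p: "p = (zz, ww)" by (cases p)
    have "psi j p = (b j - a j) \<bullet> (z (j-1) - zz) + lam * ((w (j-1) - a j) \<bullet> (w (j-1) - ww))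
       - (lam * (norm (w (j-1) - b j))\<^sup>2 + lam * ((b j - a j) \<bullet> (w (j-1) - a j)))"
      unfolding psi_def p fst_conv snd_conv xe ye by (rule psi_identity)
    then show ?thesis using jfacts[OF j] by (simp add: G_def q_def p)
  qed
  have upd: "q j = q (j-1) - (rho j * gam j) *\<^sub>R G j" if j: "j \<ge> 1" for j
    using z_upd[OF j] w_upd[OF j]
    by (simp add: q_def G_def a_def b_def algebra_simps)
  have desc: "2 * (rho j * gam j) * psi j p \<le> (norm (q (j-1) - p))\<^sup>2 - (norm (q j - p))\<^sup>2"
    if j: "j \<ge> 1" for j p
    unfolding psi_eq[OF j] upd[OF j] using jfacts[OF j] by (intro descent) auto
  have rj: "(norm (P j - q (j-1)))\<^sup>2 = lam\<^sup>2 * (norm (M (u j) + C (v j) - d))\<^sup>2 + (norm (d - C (v j) - w (j-1)))\<^sup>2"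
    for j
  proof -
    have "P j - q (j-1) = (lam *\<^sub>R (M (u j) + C (v j) - d), d - C (v j) - w (j-1))"
      by (simp add: P_def q_def ye a_def b_def algebra_simps)
    then show ?thesis by (simp add: norm_Pair power_mult_distrib)
  qed
  have h1eq: "h1 = (\<lambda>p. fconj f (- adjoint M p) + ereal (0 \<bullet> p))"
    by (simp add: h1_def zero_ereal_def[symmetric])
  have sub1: "- a j \<in> subdiff h1 (y j)" if j: "j \<ge> 1" for j
  proof -
    have mn: "\<forall>u'. f (u j) + ereal ((z (j-1) + lam *\<^sub>R (C (v j) - d)) \<bullet> (M (u j) - 0) + lam / 2 * (norm (M (u j) - 0))\<^sup>2)
       \<le> f u' + ereal ((z (j-1) + lam *\<^sub>R (C (v j) - d)) \<bullet> (M u' - 0) + lam / 2 * (norm (M u' - 0))\<^sup>2)"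
      using u_min[OF j] by simp
    obtain r where r: "f (u j) = ereal r"
      and sg: "\<forall>uu. ereal (r + (- adjoint M (z (j-1) + lam *\<^sub>R (C (v j) - d) + lam *\<^sub>R (M (u j) - 0))) \<bullet> (uu - u j)) \<le> f uu"
      using min_subgrad[OF f_pcc(1) f_pcc(3) lin(1) mn] by blast
    have "z (j-1) + lam *\<^sub>R (C (v j) - d) + lam *\<^sub>R (M (u j) - 0) = y j"
      by (simp add: hy algebra_simps)
    then have sg': "\<forall>uu. ereal (r + (- adjoint M (y j)) \<bullet> (uu - u j)) \<le> f uu" using sg by simp
    have "0 - M (u j) \<in> subdiff (\<lambda>p. fconj f (- adjoint M p) + ereal (0 \<bullet> p)) (y j)"
      by (rule subgrad_conj[OF lin(1) r sg'])
    then show ?thesis by (simp add: h1eq a_def)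
  qed
  have sub2: "b j \<in> subdiff h2 (x j)" if j: "j \<ge> 1" for j
  proof -
    obtain r where r: "g (v j) = ereal r"
      and sg: "\<forall>vv. ereal (r + (- adjoint C (z (j-1) + lam *\<^sub>R w (j-1) + lam *\<^sub>R (C (v j) - d))) \<bullet> (vv - v j)) \<le> g vv"
      using min_subgrad[OF g_pcc(1) g_pcc(3) lin(2) v_min[OF j]] by blast
    then have sg': "\<forall>vv. ereal (r + (- adjoint C (x j)) \<bullet> (vv - v j)) \<le> g vv" by (simp add: hx)
    have "d - C (v j) \<in> subdiff h2 (x j)" unfolding h2_def by (rule subgrad_conj[OF lin(2) r sg'])
    then show ?thesis by (simp add: b_def)
  qed
  have psi_Se: "psi j ps \<ge> 0" if j: "j \<ge> 1" and ps: "ps \<in> Se h1 h2" for j ps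
  proof -
    obtain zs ws where pe: "ps = (zs, ws)" by (cases ps)
    have s1: "- ws \<in> subdiff h1 zs" and s2: "ws \<in> subdiff h2 zs" using ps pe by (auto simp: Se_def)
    have m1: "0 \<le> (- a j - - ws) \<bullet> (y j - zs)" by (rule subdiff_mono[OF sub1[OF j] s1])
    have m2: "0 \<le> (b j - ws) \<bullet> (x j - zs)" by (rule subdiff_mono[OF sub2[OF j] s2])
    have "psi j ps = (b j - ws) \<bullet> (x j - zs) + (- a j - - ws) \<bullet> (y j - zs)"
      by (simp add: psi_def pe inner_commute)
    then show ?thesis using m1 m2 by simp
  qed
  have tele: "2 * (\<Sum>j=1..n. rho j * gam j * psi j p) \<le> (norm (q 0 - p))\<^sup>2 - (norm (q n - p))\<^sup>2" for n p
  proof (induction n)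
    case 0 then show ?case by simp
  next
    case (Suc n)
    have "2 * (\<Sum>j=1..Suc n. rho j * gam j * psi j p)
        = 2 * (\<Sum>j=1..n. rho j * gam j * psi j p) + 2 * (rho (Suc n) * gam (Suc n)) * psi (Suc n) p"
      by (simp add: algebra_simps)
    also have "\<dots> \<le> ((norm (q 0 - p))\<^sup>2 - (norm (q n - p))\<^sup>2) + ((norm (q n - p))\<^sup>2 - (norm (q (Suc n) - p))\<^sup>2)"
      using Suc.IH desc[of "Suc n" p] by (intro add_mono) auto
    finally show ?case by simp
  qed
  have fejer: "norm (q n - ps) \<le> norm (q 0 - ps)" if ps: "ps \<in> Se h1 h2" for n ps
  proof (induction n)
    case 0 then show ?case by simp
  next
    case (Suc n)
    have j: "Suc n \<ge> 1" by simp
    have "0 \<le> 2 * (rho (Suc n) * gam (Suc n)) * psi (Suc n) ps"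
      using jfacts[OF j] psi_Se[OF j ps] by simp
    then have "(norm (q (Suc n) - ps))\<^sup>2 \<le> (norm (q n - ps))\<^sup>2" using desc[OF j, of ps] by (simp only: diff_Suc_1)
    then have "norm (q (Suc n) - ps) \<le> norm (q n - ps)" by (rule power2_le_imp_le) simp
    then show ?case using Suc.IH by simp
  qed
  have tpos: "rho j * gam j > 0" if "j \<in> {1..k}" for j using jfacts[of j] that by simp
  have Gpos: "Gam > 0" unfolding hGam using k_ge tpos by (intro sum_pos) auto
  have Gne: "Gam \<noteq> 0" using Gpos by simp
  define ab where "ab = M ubar"
  define bb where "bb = d - C vbar"
  define Y where "Y = (\<Sum>j=1..k. (rho j * gam j) *\<^sub>R y j)"
  define yb where "yb = (1/Gam) *\<^sub>R Y"
  have sa: "(\<Sum>j=1..k. (rho j * gam j) *\<^sub>R a j) = Gam *\<^sub>R ab"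
    using Gne by (simp add: ab_def hubar linear_scale[OF lin(1)] linear_sum[OF lin(1)] a_def)
  have sb: "(\<Sum>j=1..k. (rho j * gam j) *\<^sub>R b j) = Gam *\<^sub>R bb"
  proof -
    have "(\<Sum>j=1..k. (rho j * gam j) *\<^sub>R b j)
        = (\<Sum>j=1..k. (rho j * gam j) *\<^sub>R d) - (\<Sum>j=1..k. (rho j * gam j) *\<^sub>R C (v j))"
      by (simp add: b_def scaleR_diff_right sum_subtractf)
    also have "(\<Sum>j=1..k. (rho j * gam j) *\<^sub>R d) = Gam *\<^sub>R d"
      by (simp add: hGam scaleR_sum_left)
    also have "(\<Sum>j=1..k. (rho j * gam j) *\<^sub>R C (v j)) = Gam *\<^sub>R C vbar"
      using Gne by (simp add: hvbar linear_scale[OF lin(2)] linear_sum[OF lin(2)])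
    finally show ?thesis by (simp add: bb_def scaleR_diff_right)
  qed
  have sy: "Y = Gam *\<^sub>R yb" using Gne by (simp add: yb_def)
  have tm: "(rho j*gam j) * ((u j - ubar) \<bullet> (- adjoint M (y j))) + (rho j*gam j) * ((v j - vbar) \<bullet> (- adjoint C (x j)))
     = (rho j*gam j) * psi j (yb, bb) - ((rho j * gam j) * (- (yb \<bullet> (b j - a j)) + y j \<bullet> (bb - ab)))" for j
  proof -
    have e1: "(u j - ubar) \<bullet> (- adjoint M (y j)) = (ab - a j) \<bullet> y j"
      by (simp add: adjoint_works[OF lin(1)] linear_diff[OF lin(1)] a_def ab_def inner_simps)
    have e2: "(v j - vbar) \<bullet> (- adjoint C (x j)) = (b j - bb) \<bullet> x j"
      by (simp add: adjoint_works[OF lin(2)] linear_diff[OF lin(2)] b_def bb_def inner_simps)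
    show ?thesis unfolding e1 e2 psi_def fst_conv snd_conv
      by (simp add: inner_simps algebra_simps inner_commute)
  qed
  have zero: "(\<Sum>j=1..k. (rho j*gam j) * (- (yb \<bullet> (b j - a j)) + y j \<bullet> (bb - ab))) = 0"
  proof -
    have e1: "(\<Sum>j=1..k. (rho j*gam j) * (yb \<bullet> (b j - a j)))
        = yb \<bullet> ((\<Sum>j=1..k. (rho j * gam j) *\<^sub>R b j) - (\<Sum>j=1..k. (rho j * gam j) *\<^sub>R a j))"
      by (simp add: inner_sum_right inner_diff_right sum_subtractf algebra_simps)
    have e2: "(\<Sum>j=1..k. (rho j*gam j) * (y j \<bullet> (bb - ab))) = Y \<bullet> (bb - ab)"
      by (simp add: Y_def inner_sum_left)
    have "(\<Sum>j=1..k. (rho j*gam j) * (- (yb \<bullet> (b j - a j)) + y j \<bullet> (bb - ab)))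
       = - (\<Sum>j=1..k. (rho j*gam j) * (yb \<bullet> (b j - a j))) + (\<Sum>j=1..k. (rho j*gam j) * (y j \<bullet> (bb - ab)))"
      by (simp add: right_diff_distrib sum_subtractf)
    also have "\<dots> = 0" unfolding e1 e2 sa sb sy by (simp add: inner_simps algebra_simps inner_commute)
    finally show ?thesis .
  qed
  have mainid: "(\<Sum>j=1..k. rho j * gam j * ((u j - ubar) \<bullet> (- adjoint M (y j))))
       + (\<Sum>j=1..k. rho j * gam j * ((v j - vbar) \<bullet> (- adjoint C (x j))))
     = (\<Sum>j=1..k. rho j * gam j * psi j (yb, bb))"
  proof -
    have "(\<Sum>j=1..k. rho j * gam j * ((u j - ubar) \<bullet> (- adjoint M (y j))))
       + (\<Sum>j=1..k. rho j * gam j * ((v j - vbar) \<bullet> (- adjoint C (x j))))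
       = (\<Sum>j=1..k. (rho j*gam j) * psi j (yb, bb) - ((rho j * gam j) * (- (yb \<bullet> (b j - a j)) + y j \<bullet> (bb - ab))))"
      unfolding sum.distrib[symmetric] tm by simp
    also have "\<dots> = (\<Sum>j=1..k. rho j * gam j * psi j (yb, bb))"
      unfolding sum_subtractf zero by simp
    finally show ?thesis .
  qed
  define R where "R = (\<Sum>j=1..k. rho j * gam j * (norm (P j - q (j-1)))\<^sup>2)"
  have pbavg: "(yb, bb) = (1/Gam) *\<^sub>R (\<Sum>j=1..k. (rho j * gam j) *\<^sub>R P j)"
    using Gne by (simp add: prod_eq_iff fst_sum snd_sum P_def yb_def Y_def sb[simplified])
  have bnd: "(\<Sum>j=1..k. rho j * gam j * psi j (yb, bb)) \<le> 4 * (norm (q 0 - ps))\<^sup>2 + R / Gam"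
    if ps: "ps \<in> Se h1 h2" for ps
  proof -
    define D where "D = norm (q 0 - ps)"
    define S where "S = (\<Sum>j=1..k. rho j * gam j * norm (P j - q (j-1))) / Gam"
    have ha: "(yb, bb) - ps = (1/Gam) *\<^sub>R (\<Sum>j=1..k. (rho j * gam j) *\<^sub>R (P j - ps))"
      using Gne by (simp add: scaleR_diff_right sum_subtractf scaleR_sum_left[symmetric] hGam[symmetric, simplified] pbavg)
    have n1: "norm ((yb, bb) - ps) \<le> (1/Gam) * (\<Sum>j=1..k. rho j * gam j * norm (P j - ps))"
      unfolding ha by (rule avg_norm) (use tpos Gpos in auto)
    have n2: "(\<Sum>j=1..k. rho j * gam j * norm (P j - ps))
        \<le> (\<Sum>j=1..k. rho j * gam j * (norm (P j - q (j-1)) + D))"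
    proof (rule sum_mono)
      fix j assume j: "j \<in> {1..k}"
      have "norm (P j - ps) \<le> norm (P j - q (j-1)) + norm (q (j-1) - ps)"
        using norm_triangle_ineq[of "P j - q (j-1)" "q (j-1) - ps"] by simp
      also have "\<dots> \<le> norm (P j - q (j-1)) + D" using fejer[OF ps, of "j-1"] by (simp add: D_def)
      finally show "rho j * gam j * norm (P j - ps) \<le> rho j * gam j * (norm (P j - q (j-1)) + D)"
        using tpos[OF j] by (intro mult_left_mono) auto
    qed
    have n3: "(\<Sum>j=1..k. rho j * gam j * (norm (P j - q (j-1)) + D)) = S * Gam + Gam * D"
      using Gne by (simp add: S_def distrib_left sum.distrib sum_distrib_right[symmetric] hGam)
    have n4: "norm ((yb, bb) - ps) \<le> S + D"
    proof -
      have "norm ((yb, bb) - ps) \<le> (1/Gam) * (S * Gam + Gam * D)"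
        using n1 n2 n3 Gpos by (smt (verit) divide_pos_pos mult_left_mono)
      moreover have "(1/Gam) * (S * Gam + Gam * D) = S + D" using Gne by (simp add: field_simps)
      ultimately show ?thesis by simp
    qed
    have n5: "norm (q 0 - (yb, bb)) \<le> 2 * D + S"
    proof -
      have "norm (q 0 - (yb, bb)) \<le> norm (q 0 - ps) + norm (ps - (yb, bb))"
      proof -
        have e: "q 0 - ps + (ps - (yb, bb)) = q 0 - (yb, bb)" by simp
        show ?thesis using norm_triangle_ineq[of "q 0 - ps" "ps - (yb, bb)"] unfolding e .
      qed
      then show ?thesis using n4 norm_minus_commute[of "(yb, bb)" ps] by (simp add: D_def)
    qed
    have S0: "0 \<le> S" using Gpos tpos unfolding S_def
      by (intro divide_nonneg_pos sum_nonneg) (auto intro!: mult_nonneg_nonneg[OF less_imp_le] tpos)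
    have D0: "0 \<le> D" by (simp add: D_def)
    have n6: "(norm (q 0 - (yb, bb)))\<^sup>2 \<le> (2 * D + S)\<^sup>2"
      using n5 by (intro power_mono) auto
    have n7: "(2 * D + S)\<^sup>2 \<le> 8 * D\<^sup>2 + 2 * S\<^sup>2"
      using sum_power2_ge_zero[of "2*D - S" 0] by (simp add: power2_eq_square algebra_simps)
    have cs: "S\<^sup>2 \<le> R / Gam"
      unfolding S_def R_def hGam
      using cauchy_weighted[where A="{1..k}" and t="\<lambda>j. rho j * gam j" and r="\<lambda>j. norm (P j - q (j-1))"]
        tpos Gpos hGam by simp
    have "2 * (\<Sum>j=1..k. rho j * gam j * psi j (yb, bb)) \<le> (norm (q 0 - (yb, bb)))\<^sup>2"
      using tele[where n=k and p="(yb, bb)"] zero_le_power2[of "norm (q k - (yb, bb))"] by linarith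
    then show ?thesis using n6 n7 cs unfolding D_def by linarith
  qed
  obtain us vs zs where sd: "is_saddle f g M C d us vs zs" using A1 by blast
  have Sne: "Se h1 h2 \<noteq> {}"
    using saddle_Se[OF f_pcc(1) g_pcc(1) lin sd] unfolding h1_def h2_def by blast
  have Kb: "(\<Sum>j=1..k. rho j * gam j * psi j (yb, bb)) - R / Gam \<le> 4 * d0\<^sup>2"
  proof (cases "(\<Sum>j=1..k. rho j * gam j * psi j (yb, bb)) - R / Gam \<le> 0")
    case True then show ?thesis by (smt (verit) zero_le_power2)
  next
    case False
    define K where "K = (\<Sum>j=1..k. rho j * gam j * psi j (yb, bb)) - R / Gam"
    have "sqrt (K/4) \<le> dist (z 0, w 0) ps" if ps: "ps \<in> Se h1 h2" for ps
    proof -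
      have "K/4 \<le> (norm (q 0 - ps))\<^sup>2" using bnd[OF ps] unfolding K_def by simp
      then have "sqrt (K/4) \<le> sqrt ((norm (q 0 - ps))\<^sup>2)" by (rule real_sqrt_le_mono)
      then show ?thesis by (simp add: dist_norm q_def)
    qed
    then have "sqrt (K/4) \<le> d0"
      unfolding hd0 infdist_notempty[OF Sne] by (intro cINF_greatest Sne) auto
    then have "(sqrt (K/4))\<^sup>2 \<le> d0\<^sup>2" using False K_def by (intro power_mono) auto
    then show ?thesis using False unfolding K_def by simp
  qed
  have Req: "R = (\<Sum>j=1..k. rho j * gam j *
              (lam\<^sup>2 * (norm (M (u j) + C (v j) - d))\<^sup>2 + (norm (d - C (v j) - w (j-1)))\<^sup>2))"
    unfolding R_def rj by simp
  have "(1 / Gam) * (\<Sum>j=1..k. rho j * gam j * ((u j - ubar) \<bullet> (- adjoint M (y j))))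
       + (1 / Gam) * (\<Sum>j=1..k. rho j * gam j * ((v j - vbar) \<bullet> (- adjoint C (x j))))
     = (1 / Gam) * (\<Sum>j=1..k. rho j * gam j * psi j (yb, bb))"
    unfolding mainid[symmetric] by (simp add: distrib_left)
  also have "\<dots> \<le> (1 / Gam) * ((1 / Gam) * R + 4 * d0\<^sup>2)"
    using Kb Gpos by (intro mult_left_mono) auto
  finally show ?thesis unfolding Req .
qed

end
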